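(* If $G$ is a connected graph on at least two vertices and $H$ is any graph, then $\chi_{\mu_2}(G\circ H)\le \theta(G^{[\natural 2]})\le \theta\big((G\circ H)^{[\natural 2]}\big)$. Moreover, both inequalities are sharp (each is attained with equality for suitable such $G$ and $H$).
   Context: The lexicographic product $G\circ H$ has vertex set $V(G)\times V(H)$, with $(g,h)$ adjacent to $(g',h')$ iff $gg'\in E(G)$, or $g=g'$ and $hh'\in E(H)$. The exact distance-$2$ graph $X^{[\natural 2]}$ has vertex set $V(X)$, two vertices being adjacent iff their distance in $X$ equals $2$. $\theta(X)$ is the clique cover number (minimum number of cliques partitioning $V(X)$). A set $M\subseteq V(X)$ is a $2$-distance mutual-visibility set if for every two vertices $u,v\in M$ there exists a shortest $u,v$-path of length at most $2$ none of whose internal vertices lies in $M$. $\chi_{\mu_2}(X)$ is the minimum cardinality of a partition of $V(X)$ into $2$-distance mutual-visibility sets. *)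

theory Defs
  imports Main
begin

record 'a sgraph =
  verts :: "'a set"
  adj :: "'a \<Rightarrow> 'a \<Rightarrow> bool"

definition sgraph :: "('a, 'b) sgraph_scheme \<Rightarrow> bool" where
  "sgraph G \<longleftrightarrow> finite (verts G) \<and> verts G \<noteq> {}
     \<and> (\<forall>u v. adj G u v \<longrightarrow> u \<in> verts G \<and> v \<in> verts G)
     \<and> (\<forall>u v. adj G u v \<longrightarrow> adj G v u)
     \<and> (\<forall>v. \<not> adj G v v)"

text \<open>A walk from u to v given as its vertex list; its length is length xs - 1.\<close>
definition is_walk :: "('a, 'b) sgraph_scheme \<Rightarrow> 'a \<Rightarrow> 'a \<Rightarrow> 'a list \<Rightarrow> bool" where
  "is_walk G u v xs \<longleftrightarrow> xs \<noteq> [] \<and> hd xs = u \<and> last xs = v \<and> set xs \<subseteq> verts G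
     \<and> (\<forall>i. Suc i < length xs \<longrightarrow> adj G (xs ! i) (xs ! Suc i))"

definition connected :: "('a, 'b) sgraph_scheme \<Rightarrow> bool" where
  "connected G \<longleftrightarrow> (\<forall>u\<in>verts G. \<forall>v\<in>verts G. \<exists>xs. is_walk G u v xs)"

definition dist_eq :: "('a, 'b) sgraph_scheme \<Rightarrow> 'a \<Rightarrow> 'a \<Rightarrow> nat \<Rightarrow> bool" where
  "dist_eq G u v k \<longleftrightarrow> (\<exists>xs. is_walk G u v xs \<and> length xs = Suc k)
     \<and> (\<forall>m<k. \<not> (\<exists>xs. is_walk G u v xs \<and> length xs = Suc m))"

definition lex_prod :: "('a, 'c) sgraph_scheme \<Rightarrow> ('b, 'd) sgraph_scheme \<Rightarrow> ('a \<times> 'b) sgraph" where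
  "lex_prod G H = \<lparr> verts = verts G \<times> verts H,
     adj = (\<lambda>(g, h) (g', h'). (g, h) \<in> verts G \<times> verts H \<and> (g', h') \<in> verts G \<times> verts H
              \<and> (adj G g g' \<or> (g = g' \<and> adj H h h'))) \<rparr>"

definition exact_dist2 :: "('a, 'b) sgraph_scheme \<Rightarrow> 'a sgraph" where
  "exact_dist2 X = \<lparr> verts = verts X,
     adj = (\<lambda>u v. u \<in> verts X \<and> v \<in> verts X \<and> dist_eq X u v 2) \<rparr>"

definition is_partition :: "'a set \<Rightarrow> 'a set set \<Rightarrow> bool" where
  "is_partition V P \<longleftrightarrow> \<Union>P = V \<and> {} \<notin> P \<and> (\<forall>A\<in>P. \<forall>B\<in>P. A \<noteq> B \<longrightarrow> A \<inter> B = {})"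

definition is_clique :: "('a, 'b) sgraph_scheme \<Rightarrow> 'a set \<Rightarrow> bool" where
  "is_clique X C \<longleftrightarrow> C \<subseteq> verts X \<and> (\<forall>u\<in>C. \<forall>v\<in>C. u \<noteq> v \<longrightarrow> adj X u v)"

definition theta :: "('a, 'b) sgraph_scheme \<Rightarrow> nat" where
  "theta X = (LEAST n. \<exists>P. is_partition (verts X) P \<and> (\<forall>C\<in>P. is_clique X C) \<and> card P = n)"

definition mv2_set :: "('a, 'b) sgraph_scheme \<Rightarrow> 'a set \<Rightarrow> bool" where
  "mv2_set X M \<longleftrightarrow> M \<subseteq> verts X \<and>
     (\<forall>u\<in>M. \<forall>v\<in>M. \<exists>k\<le>2. dist_eq X u v k \<and>
        (\<exists>xs. is_walk X u v xs \<and> length xs = Suc k \<and> set (butlast (tl xs)) \<inter> M = {}))"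

definition chi_mu2 :: "('a, 'b) sgraph_scheme \<Rightarrow> nat" where
  "chi_mu2 X = (LEAST n. \<exists>P. is_partition (verts X) P \<and> (\<forall>M\<in>P. mv2_set X M) \<and> card P = n)"

end

theory Submission
  imports Defs
begin

lemma walk1: "(is_walk X u v xs \<and> length xs = Suc 0) \<longleftrightarrow> (xs = [u] \<and> u = v \<and> u \<in> verts X)"
  by (auto simp: is_walk_def length_Suc_conv)

lemma walk2: "(is_walk X u v xs \<and> length xs = Suc (Suc 0)) \<longleftrightarrow> (xs = [u,v] \<and> adj X u v \<and> u \<in> verts X \<and> v \<in> verts X)"
  by (auto simp: is_walk_def length_Suc_conv less_Suc_eq)

lemma walk3: "(is_walk X u v xs \<and> length xs = Suc (Suc (Suc 0))) \<longleftrightarrow>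
   (\<exists>x. xs = [u,x,v] \<and> adj X u x \<and> adj X x v \<and> u \<in> verts X \<and> x \<in> verts X \<and> v \<in> verts X)"
  by (auto simp: is_walk_def length_Suc_conv less_Suc_eq nth_Cons split: nat.splits)

lemma ex1: "(\<exists>xs. is_walk X u v xs \<and> length xs = Suc 0) \<longleftrightarrow> u = v \<and> u \<in> verts X"
  using walk1[of X u v] by blast
lemma ex2: "(\<exists>xs. is_walk X u v xs \<and> length xs = Suc (Suc 0)) \<longleftrightarrow> adj X u v \<and> u \<in> verts X \<and> v \<in> verts X"
  using walk2[of X u v] by blast
lemma ex3: "(\<exists>xs. is_walk X u v xs \<and> length xs = Suc (Suc (Suc 0))) \<longleftrightarrow>
   (\<exists>x. adj X u x \<and> adj X x v \<and> u \<in> verts X \<and> x \<in> verts X \<and> v \<in> verts X)"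
  using walk3[of X u v] by blast

lemma dist0: "dist_eq X u v 0 \<longleftrightarrow> u = v \<and> u \<in> verts X"
  unfolding dist_eq_def ex1 by simp

lemma dist1: "dist_eq X u v (Suc 0) \<longleftrightarrow> adj X u v \<and> u \<in> verts X \<and> v \<in> verts X \<and> u \<noteq> v"
  unfolding dist_eq_def ex2 by (auto simp: ex1)

lemma dist2: "dist_eq X u v 2 \<longleftrightarrow> (\<exists>x. adj X u x \<and> adj X x v \<and> x \<in> verts X) \<and> u \<in> verts X \<and> v \<in> verts X
   \<and> u \<noteq> v \<and> \<not> adj X u v"
proof -
  have e: "(\<forall>m<(2::nat). P m) \<longleftrightarrow> P 0 \<and> P (Suc 0)" for P by (auto simp: less_2_cases_iff)
  show ?thesis unfolding dist_eq_def e unfolding numeral_2_eq_2 ex1 ex2 ex3 by auto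
qed


definition good_pair :: "('a, 'b) sgraph_scheme \<Rightarrow> 'a set \<Rightarrow> 'a \<Rightarrow> 'a \<Rightarrow> bool" where
  "good_pair X M u v \<longleftrightarrow> (\<exists>k\<le>2. dist_eq X u v k \<and>
        (\<exists>xs. is_walk X u v xs \<and> length xs = Suc k \<and> set (butlast (tl xs)) \<inter> M = {}))"

lemma mv2_alt: "mv2_set X M \<longleftrightarrow> M \<subseteq> verts X \<and> (\<forall>u\<in>M. \<forall>v\<in>M. good_pair X M u v)"
  unfolding mv2_set_def good_pair_def by simp

lemma gp0: "u \<in> verts X \<Longrightarrow> good_pair X M u u"
  unfolding good_pair_def
  apply (rule exI[of _ 0])
  using walk1[of X u u "[u]"] by (auto simp: dist0)

lemma gp1: "adj X u v \<Longrightarrow> u \<noteq> v \<Longrightarrow> u \<in> verts X \<Longrightarrow> v \<in> verts X \<Longrightarrow> good_pair X M u v"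
  unfolding good_pair_def
  apply (rule exI[of _ 1])
  using walk2[of X u v "[u,v]"] by (auto simp: dist1)

lemma gp2: "dist_eq X u v 2 \<Longrightarrow> adj X u w \<Longrightarrow> adj X w v \<Longrightarrow> w \<in> verts X \<Longrightarrow> u \<in> verts X \<Longrightarrow> v \<in> verts X
   \<Longrightarrow> w \<notin> M \<Longrightarrow> good_pair X M u v"
  unfolding good_pair_def
  apply (rule exI[of _ 2])
  using walk3[of X u v "[u,w,v]"] by (auto simp: numeral_2_eq_2)

lemma adj_lex: "adj (lex_prod G H) (a,b) (c,d) \<longleftrightarrow> a \<in> verts G \<and> b \<in> verts H \<and> c \<in> verts G \<and> d \<in> verts H
   \<and> (adj G a c \<or> a = c \<and> adj H b d)"
  by (simp add: lex_prod_def)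

lemma verts_lex: "verts (lex_prod G H) = verts G \<times> verts H"
  by (simp add: lex_prod_def)

lemma adj_ed2: "adj (exact_dist2 X) u v \<longleftrightarrow> u \<in> verts X \<and> v \<in> verts X \<and> dist_eq X u v 2"
  by (simp add: exact_dist2_def)

lemma verts_ed2: "verts (exact_dist2 X) = verts X"
  by (simp add: exact_dist2_def)

lemma sing_part: "is_partition V ((\<lambda>v. {v}) ` V)"
  by (auto simp: is_partition_def)

lemma theta_le: "is_partition (verts X) P \<Longrightarrow> \<forall>C\<in>P. is_clique X C \<Longrightarrow> theta X \<le> card P"
  unfolding theta_def by (rule Least_le) blast

lemma theta_ex: "\<exists>P. is_partition (verts X) P \<and> (\<forall>C\<in>P. is_clique X C) \<and> card P = theta X"
  unfolding theta_def
  apply (rule LeastI_ex)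
  using sing_part[of "verts X"] by (auto simp: is_clique_def)

lemma chi_le: "is_partition (verts X) P \<Longrightarrow> \<forall>C\<in>P. mv2_set X C \<Longrightarrow> chi_mu2 X \<le> card P"
  unfolding chi_mu2_def by (rule Least_le) blast

lemma chi_ex: "\<exists>P. is_partition (verts X) P \<and> (\<forall>C\<in>P. mv2_set X C) \<and> card P = chi_mu2 X"
  unfolding chi_mu2_def
  apply (rule LeastI_ex)
  using sing_part[of "verts X"] by (auto simp: mv2_alt gp0)

lemma theta_card: "theta X \<le> card (verts X)"
proof -
  have "theta X \<le> card ((\<lambda>v. {v}) ` verts X)"
    by (rule theta_le[OF sing_part]) (auto simp: is_clique_def)
  also have "\<dots> = card (verts X)" by (rule card_image) (auto simp: inj_on_def)
  finally show ?thesis .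
qed

lemma part_fin: "is_partition V P \<Longrightarrow> finite V \<Longrightarrow> finite P"
  unfolding is_partition_def by (metis Pow_iff finite_Pow_iff finite_subset subsetI Sup_upper)

lemma part_le1: assumes "is_partition V P" "finite V" "V \<noteq> {}" "card P \<le> 1" shows "P = {V}"
proof -
  have f: "finite P" using part_fin assms by blast
  have "P \<noteq> {}" using assms(1,3) by (auto simp: is_partition_def)
  then have "card P = 1" using f assms(4) by (simp add: card_gt_0_iff le_antisym Suc_le_eq)
  then obtain A where "P = {A}" by (rule card_1_singletonE)
  then show ?thesis using assms(1) by (auto simp: is_partition_def)
qed

lemma neighbor: assumes "sgraph G" "connected G" "card (verts G) \<ge> 2" "g \<in> verts G"
  shows "\<exists>x. adj G g x"
proof -
  have "verts G \<noteq> {g}" using assms(3) by auto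
  then obtain g2 where g2: "g2 \<in> verts G" "g2 \<noteq> g" using assms(4) by blast
  then obtain xs where w: "is_walk G g g2 xs" using assms(2,4) unfolding connected_def by blast
  have "length xs \<noteq> 1" using w g2 unfolding is_walk_def
    by (metis One_nat_def hd_conv_nth last_conv_nth diff_Suc_1 length_0_conv zero_neq_one)
  then have "Suc 0 < length xs" using w unfolding is_walk_def by (cases xs) auto
  then have "adj G (xs ! 0) (xs ! Suc 0)" using w unfolding is_walk_def by blast
  moreover have "xs ! 0 = g" using w unfolding is_walk_def by (metis hd_conv_nth)
  ultimately show ?thesis by blast
qed


lemma part1a:
  fixes G :: "'a sgraph" and H :: "'b sgraph"
  assumes sG: "sgraph G" and sH: "sgraph H" and cG: "connected G" and cd: "card (verts G) \<ge> 2"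
  shows "chi_mu2 (lex_prod G H) \<le> theta (exact_dist2 G)"
proof -
  obtain P where P: "is_partition (verts G) P" "\<forall>C\<in>P. is_clique (exact_dist2 G) C"
      "card P = theta (exact_dist2 G)" using theta_ex[of "exact_dist2 G"] by (auto simp: verts_ed2)
  have VH: "verts H \<noteq> {}" using sH by (simp add: sgraph_def)
  have irr: "\<not> adj G v v" for v using sG by (simp add: sgraph_def)
  define P' where "P' = (\<lambda>C. C \<times> verts H) ` P"
  have part: "is_partition (verts (lex_prod G H)) P'"
    unfolding is_partition_def verts_lex
  proof (intro conjI ballI impI)
    show "\<Union> P' = verts G \<times> verts H" using P(1) unfolding P'_def is_partition_def by blast
    show "{} \<notin> P'"
    proof
      assume "{} \<in> P'"
      then obtain C where C: "C \<in> P" "{} = C \<times> verts H" unfolding P'_def by blast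
      then have "C \<noteq> {}" using P(1) unfolding is_partition_def by blast
      then obtain c where "c \<in> C" by blast
      moreover obtain h where "h \<in> verts H" using VH by blast
      ultimately show False using C(2) by blast
    qed
  next
    fix A B assume "A \<in> P'" "B \<in> P'" "A \<noteq> B"
    then obtain A' B' where "A' \<in> P" "B' \<in> P" "A = A' \<times> verts H" "B = B' \<times> verts H" "A' \<noteq> B'"
      unfolding P'_def by blast
    then show "A \<inter> B = {}" using P(1) unfolding is_partition_def by blast
  qed
  have mv: "mv2_set (lex_prod G H) M" if M: "M \<in> P'" for M
  proof -
    obtain C where C: "C \<in> P" and MC: "M = C \<times> verts H" using M P'_def by blast
    have CV: "C \<subseteq> verts G" using C P(1) unfolding is_partition_def by blast
    have cl: "dist_eq G u v 2" if "u \<in> C" "v \<in> C" "u \<noteq> v" for u v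
      using P(2) C that unfolding is_clique_def adj_ed2 by blast
    have xC: "x \<notin> C" if "g \<in> C" "adj G g x" for g x
      using cl[of g x] that irr dist2 by metis
    show ?thesis unfolding mv2_alt
    proof (intro conjI ballI)
      show "M \<subseteq> verts (lex_prod G H)" using CV MC by (auto simp: verts_lex)
    next
      fix u v assume u: "u \<in> M" and v: "v \<in> M"
      obtain g h g' h' where uv: "u = (g,h)" "v = (g',h')" by fastforce
      have gin: "g \<in> C" "g' \<in> C" "h \<in> verts H" "h' \<in> verts H" using u v uv MC by auto
      have gV: "g \<in> verts G" "g' \<in> verts G" using gin CV by auto
      show "good_pair (lex_prod G H) M u v"
      proof (cases "u = v")
        case True then show ?thesis using u MC CV by (auto intro!: gp0 simp: verts_lex)
      next
        case neq: False
        show ?thesis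
        proof (cases "g = g'")
          case False
          then have d: "dist_eq G g g' 2" using cl gin by blast
          then obtain x where x: "adj G g x" "adj G x g'" "x \<in> verts G" "\<not> adj G g g'"
            unfolding dist2 by blast
          have d2: "dist_eq (lex_prod G H) u v 2" unfolding dist2 uv
            using x gin gV False by (auto simp: adj_lex verts_lex)
          show ?thesis unfolding uv
            apply (rule gp2[where w="(x,h)"])
            using d2 x gin gV xC[of g x] MC uv by (auto simp: adj_lex verts_lex)
        next
          case True
          then have hh: "h \<noteq> h'" using neq uv by auto
          show ?thesis
          proof (cases "adj H h h'")
            case True
            then show ?thesis unfolding uv using hh gin gV \<open>g = g'\<close>
              by (intro gp1) (auto simp: adj_lex verts_lex)
          next
            case False
            obtain x where x: "adj G g x" using neighbor[OF sG cG cd gV(1)] by blast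
            have xV: "x \<in> verts G" using x sG by (simp add: sgraph_def)
            have xg: "adj G x g" using x sG by (simp add: sgraph_def)
            have d2: "dist_eq (lex_prod G H) u v 2" unfolding dist2 uv
              using x xV xg gin gV False hh \<open>g = g'\<close> irr by (auto simp: adj_lex verts_lex)
            show ?thesis unfolding uv
              apply (rule gp2[where w="(x,h)"])
              using d2 x xg xV gin gV xC[of g x] MC uv \<open>g = g'\<close> by (auto simp: adj_lex verts_lex)
          qed
        qed
      qed
    qed
  qed
  have inj: "inj_on (\<lambda>C. C \<times> verts H) P"
    using P(1) VH unfolding inj_on_def is_partition_def by (auto simp: times_eq_iff)
  have "chi_mu2 (lex_prod G H) \<le> card P'" using chi_le part mv by blast
  also have "card P' = card P" unfolding P'_def using inj by (rule card_image)
  finally show ?thesis using P(3) by simp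
qed

lemma dist2_lex:
  assumes "g \<noteq> g'" "dist_eq (lex_prod G H) (g,h0) (g',h0) 2"
  shows "dist_eq G g g' 2"
proof -
  from assms(2) obtain a b where ab: "adj (lex_prod G H) (g,h0) (a,b)" "adj (lex_prod G H) (a,b) (g',h0)"
     "\<not> adj (lex_prod G H) (g,h0) (g',h0)" "g \<in> verts G" "g' \<in> verts G" "h0 \<in> verts H"
    unfolding dist2 verts_lex by auto
  then show ?thesis unfolding dist2 using assms(1) by (auto simp: adj_lex)
qed

lemma part1b:
  fixes G :: "'a sgraph" and H :: "'b sgraph"
  assumes sG: "sgraph G" and sH: "sgraph H"
  shows "theta (exact_dist2 G) \<le> theta (exact_dist2 (lex_prod G H))"
proof -
  obtain Q where Q: "is_partition (verts G \<times> verts H) Q" "\<forall>C\<in>Q. is_clique (exact_dist2 (lex_prod G H)) C"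
      "card Q = theta (exact_dist2 (lex_prod G H))"
    using theta_ex[of "exact_dist2 (lex_prod G H)"] by (auto simp: verts_ed2 verts_lex)
  obtain h0 where h0: "h0 \<in> verts H" using sH by (auto simp: sgraph_def)
  have fin: "finite (verts G \<times> verts H)" using sG sH by (simp add: sgraph_def)
  have fQ: "finite Q" using part_fin[OF Q(1) fin] .
  define f where "f = (\<lambda>A::('a \<times> 'b) set. {g. (g,h0) \<in> A})"
  define P where "P = f ` Q - {{}}"
  have part: "is_partition (verts G) P"
    unfolding is_partition_def
  proof (intro conjI ballI impI)
    show "\<Union> P = verts G"
    proof
      show "\<Union> P \<subseteq> verts G" using Q(1) unfolding P_def f_def is_partition_def by auto
      show "verts G \<subseteq> \<Union> P"
      proof
        fix g assume "g \<in> verts G"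
        then have "(g,h0) \<in> \<Union>Q" using Q(1) h0 unfolding is_partition_def by auto
        then obtain A where "A \<in> Q" "(g,h0) \<in> A" by blast
        then show "g \<in> \<Union> P" unfolding P_def f_def by blast
      qed
    qed
    show "{} \<notin> P" unfolding P_def by blast
  next
    fix A B assume "A \<in> P" "B \<in> P" "A \<noteq> B"
    then obtain A' B' where "A' \<in> Q" "B' \<in> Q" "A = f A'" "B = f B'" "A' \<noteq> B'" unfolding P_def by blast
    then show "A \<inter> B = {}" using Q(1) unfolding is_partition_def f_def by blast
  qed
  have cl: "is_clique (exact_dist2 G) C" if CP: "C \<in> P" for C
  proof -
    obtain A where A: "A \<in> Q" "C = f A" using CP P_def by blast
    have "C \<subseteq> verts G" using A Q(1) unfolding f_def is_partition_def by blast
    moreover have "adj (exact_dist2 G) u v" if "u \<in> C" "v \<in> C" "u \<noteq> v" for u v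
    proof -
      have "adj (exact_dist2 (lex_prod G H)) (u,h0) (v,h0)"
        using Q(2) A that unfolding is_clique_def f_def by blast
      then have "dist_eq (lex_prod G H) (u,h0) (v,h0) 2" "u \<in> verts G" "v \<in> verts G"
        unfolding adj_ed2 verts_lex by auto
      then show ?thesis using dist2_lex[OF that(3)] by (simp add: adj_ed2)
    qed
    ultimately show ?thesis unfolding is_clique_def verts_ed2 by blast
  qed
  have "theta (exact_dist2 G) \<le> card P" using theta_le[of "exact_dist2 G" P] part cl by (simp add: verts_ed2)
  also have "\<dots> \<le> card (f ` Q)" unfolding P_def using fQ by (simp add: card_mono)
  also have "\<dots> \<le> card Q" using card_image_le fQ by blast
  finally show ?thesis using Q(3) by simp
qed


definition G2 :: "nat sgraph" where
  "G2 = \<lparr>verts = {0,1}, adj = (\<lambda>u v. u \<noteq> v \<and> u \<in> {0,1} \<and> v \<in> {0,1})\<rparr>"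
definition H2 :: "nat sgraph" where
  "H2 = \<lparr>verts = {0,1}, adj = (\<lambda>u v. False)\<rparr>"
definition H1 :: "nat sgraph" where
  "H1 = \<lparr>verts = {0}, adj = (\<lambda>u v. False)\<rparr>"

lemma sG2: "sgraph G2" by (auto simp: sgraph_def G2_def)
lemma sH2: "sgraph H2" by (auto simp: sgraph_def H2_def)
lemma sH1: "sgraph H1" by (auto simp: sgraph_def H1_def)
lemma cardG2: "card (verts G2) \<ge> 2" by (simp add: G2_def)
lemma cG2: "connected G2"
  unfolding connected_def
proof (intro ballI)
  fix u v assume u: "u \<in> verts G2" and v: "v \<in> verts G2"
  show "\<exists>xs. is_walk G2 u v xs"
  proof (cases "u = v")
    case True then show ?thesis using walk1[of G2 u u "[u]"] u by blast
  next
    case False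
    have "adj G2 u v" using u v False by (simp add: G2_def)
    then show ?thesis using walk2[of G2 u v "[u,v]"] u v by blast
  qed
qed

lemma thetaG2: "theta (exact_dist2 G2) = 2"
proof (rule antisym)
  show "theta (exact_dist2 G2) \<le> 2" using theta_card[of "exact_dist2 G2"] by (simp add: verts_ed2 G2_def)
  obtain P where P: "is_partition (verts G2) P" "\<forall>C\<in>P. is_clique (exact_dist2 G2) C"
      "card P = theta (exact_dist2 G2)" using theta_ex[of "exact_dist2 G2"] by (auto simp: verts_ed2)
  show "2 \<le> theta (exact_dist2 G2)"
  proof (rule ccontr)
    assume "\<not> 2 \<le> theta (exact_dist2 G2)"
    then have "P = {verts G2}" using part_le1[OF P(1)] P(3) by (simp add: G2_def)
    then have "is_clique (exact_dist2 G2) {0,1}" using P(2) by (simp add: G2_def)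
    then have "dist_eq G2 0 1 2" unfolding is_clique_def adj_ed2 by auto
    then show False unfolding dist2 by (simp add: G2_def)
  qed
qed

lemma chiG2H2: "chi_mu2 (lex_prod G2 H2) = 2"
proof (rule antisym)
  show "chi_mu2 (lex_prod G2 H2) \<le> 2" using part1a[OF sG2 sH2 cG2 cardG2] thetaG2 by simp
  obtain P where P: "is_partition (verts (lex_prod G2 H2)) P" "\<forall>C\<in>P. mv2_set (lex_prod G2 H2) C"
      "card P = chi_mu2 (lex_prod G2 H2)" using chi_ex by blast
  show "2 \<le> chi_mu2 (lex_prod G2 H2)"
  proof (rule ccontr)
    let ?V = "verts (lex_prod G2 H2)"
    have V: "?V = {0,1} \<times> {0,1}" by (simp add: verts_lex G2_def H2_def)
    assume "\<not> 2 \<le> chi_mu2 (lex_prod G2 H2)"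
    then have "P = {?V}" using part_le1[OF P(1)] P(3) by (simp add: V)
    then have "mv2_set (lex_prod G2 H2) ?V" using P(2) by simp
    then have "good_pair (lex_prod G2 H2) ?V (0,0) (0,1)" unfolding mv2_alt V by simp
    then obtain k xs where k: "k \<le> 2" "dist_eq (lex_prod G2 H2) (0,0) (0,1) k"
      "is_walk (lex_prod G2 H2) (0,0) (0,1) xs" "length xs = Suc k" "set (butlast (tl xs)) \<inter> ?V = {}"
      unfolding good_pair_def by blast
    have "k = 0 \<or> k = 1 \<or> k = 2" using k(1) by auto
    then show False
    proof (elim disjE)
      assume "k = 0" then show False using k(2) by (simp add: dist0)
    next
      assume "k = 1" then show False using k(2) by (simp add: dist1 adj_lex G2_def H2_def)
    next
      assume "k = 2"
      then obtain x where "xs = [(0,0),x,(0,1)]" "x \<in> ?V"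
        using walk3[of "lex_prod G2 H2" "(0,0)" "(0,1)" xs] k(3,4) by (auto simp: numeral_2_eq_2)
      then show False using k(5) by simp
    qed
  qed
qed

lemma thetaG2H1: "theta (exact_dist2 (lex_prod G2 H1)) = 2"
proof (rule antisym)
  show "theta (exact_dist2 (lex_prod G2 H1)) \<le> 2"
    using theta_card[of "exact_dist2 (lex_prod G2 H1)"] by (simp add: verts_ed2 verts_lex G2_def H1_def)
  show "2 \<le> theta (exact_dist2 (lex_prod G2 H1))" using part1b[OF sG2 sH1] thetaG2 by simp
qed

theorem theorem4p1:
  shows "(\<forall>(G::'a sgraph) (H::'b sgraph).
            sgraph G \<and> sgraph H \<and> connected G \<and> card (verts G) \<ge> 2 \<longrightarrow>
              chi_mu2 (lex_prod G H) \<le> theta (exact_dist2 G)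
              \<and> theta (exact_dist2 G) \<le> theta (exact_dist2 (lex_prod G H)))
       \<and> (\<exists>(G::nat sgraph) (H::nat sgraph).
            sgraph G \<and> sgraph H \<and> connected G \<and> card (verts G) \<ge> 2
            \<and> chi_mu2 (lex_prod G H) = theta (exact_dist2 G))
       \<and> (\<exists>(G::nat sgraph) (H::nat sgraph).
            sgraph G \<and> sgraph H \<and> connected G \<and> card (verts G) \<ge> 2
            \<and> theta (exact_dist2 G) = theta (exact_dist2 (lex_prod G H)))"
proof (intro conjI)
  show "\<forall>(G::'a sgraph) (H::'b sgraph).
            sgraph G \<and> sgraph H \<and> connected G \<and> card (verts G) \<ge> 2 \<longrightarrow>
              chi_mu2 (lex_prod G H) \<le> theta (exact_dist2 G)
              \<and> theta (exact_dist2 G) \<le> theta (exact_dist2 (lex_prod G H))"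
    using part1a part1b by blast
  show "\<exists>(G::nat sgraph) (H::nat sgraph).
            sgraph G \<and> sgraph H \<and> connected G \<and> card (verts G) \<ge> 2
            \<and> chi_mu2 (lex_prod G H) = theta (exact_dist2 G)"
    using sG2 sH2 cG2 cardG2 chiG2H2 thetaG2 by metis
  show "\<exists>(G::nat sgraph) (H::nat sgraph).
            sgraph G \<and> sgraph H \<and> connected G \<and> card (verts G) \<ge> 2
            \<and> theta (exact_dist2 G) = theta (exact_dist2 (lex_prod G H))"
    using sG2 sH1 cG2 cardG2 thetaG2H1 thetaG2 by metis
qed

end
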